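(* Let $G=(V,E)$ be a multigraph with vertices $u_1,\dots,u_k$ ($k\ge2$) and edges $e_1,\dots,e_\ell$ with $\ell>2k$, and consider the fair division instance $\mathcal{I}(G)$ described in the context. If $G$ has no independent set of size larger than $t$, then every EF1 allocation of $\mathcal{I}(G)$ has social welfare at most $t+2$.
   Context: Instance $\mathcal{I}(G)$: agents are $a_i^{(j)}$ ($1\le i\le\ell$, $1\le j\le k$) and $s^{(j)}$ ($1\le j\le k$), so $n=k\ell+k$. Items are $b_r^{(j)}$ ($1\le r\le k$, $1\le j\le k$), with $B^{(j)}=\{b_1^{(j)},\dots,b_k^{(j)}\}$, and $c_1,\dots,c_{k^2}$ forming $C$, so $m=2k^2$. Let $\tau=2/k^2$. Agent $s^{(j)}$ values each item of $B^{(j)}$ at $1/k$ and every other item at $0$. If edge $e_i$ has endpoints $u_{i_1},u_{i_2}$, agent $a_i^{(j)}$ values each of $b_{i_1}^{(j)},b_{i_2}^{(j)}$ at $\tau/2$, each item of $C$ at $(1-\tau)/k^2$, and every other item at $0$. Valuations are additive (and normalized). An allocation is a partition of the items among agents; it is EF1 if for all agents $x\ne y$ with $A_y\ne\emptyset$ there is $g\in A_y$ with $v_x(A_x)\ge v_x(A_y\setminus\{g\})$; social welfare is $\sum_x v_x(A_x)$. An independent set is a set of vertices no two of which are joined by an edge. *)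

theory Defs
  imports Complex_Main
begin

(* Vertices u_1..u_k are encoded as 0..k-1, edges e_1..e_l as 0..l-1.
   Edge i has endpoints end1 i and end2 i. *)

datatype agent = AgA nat nat  (* AgA i j  = a_i^(j) *)
              | AgS nat

datatype item = ItB nat nat   (* ItB r j  = b_r^(j) *)
              | ItC nat

definition agents :: "nat \<Rightarrow> nat \<Rightarrow> agent set" where
  "agents k l = {AgA i j | i j. i < l \<and> j < k} \<union> {AgS j | j. j < k}"

definition items :: "nat \<Rightarrow> item set" where
  "items k = {ItB r j | r j. r < k \<and> j < k} \<union> {ItC c | c. c < k^2}"

definition tau :: "nat \<Rightarrow> real" where
  "tau k = 2 / (real k)^2"

fun val :: "nat \<Rightarrow> (nat \<Rightarrow> nat) \<Rightarrow> (nat \<Rightarrow> nat) \<Rightarrow> agent \<Rightarrow> item \<Rightarrow> real" where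
  "val k e1 e2 (AgS j) (ItB r j') = (if j' = j then 1 / real k else 0)"
| "val k e1 e2 (AgS j) (ItC c) = 0"
| "val k e1 e2 (AgA i j) (ItB r j') =
     (if j' = j \<and> (r = e1 i \<or> r = e2 i) then tau k / 2 else 0)"
| "val k e1 e2 (AgA i j) (ItC c) = (1 - tau k) / (real k)^2"

definition v :: "nat \<Rightarrow> (nat \<Rightarrow> nat) \<Rightarrow> (nat \<Rightarrow> nat) \<Rightarrow> agent \<Rightarrow> item set \<Rightarrow> real" where
  "v k e1 e2 x S = (\<Sum>g\<in>S. val k e1 e2 x g)"

(* An allocation (partition of the items among agents) is a map item \<Rightarrow> agent
   sending every item to an agent; the bundle_of of x is the preimage of x. *)
definition is_allocation :: "nat \<Rightarrow> nat \<Rightarrow> (item \<Rightarrow> agent) \<Rightarrow> bool" where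
  "is_allocation k l \<pi> \<longleftrightarrow> (\<forall>g\<in>items k. \<pi> g \<in> agents k l)"

definition bundle_of :: "nat \<Rightarrow> (item \<Rightarrow> agent) \<Rightarrow> agent \<Rightarrow> item set" where
  "bundle_of k \<pi> x = {g \<in> items k. \<pi> g = x}"

definition EF1 :: "nat \<Rightarrow> nat \<Rightarrow> (nat \<Rightarrow> nat) \<Rightarrow> (nat \<Rightarrow> nat) \<Rightarrow> (item \<Rightarrow> agent) \<Rightarrow> bool" where
  "EF1 k l e1 e2 \<pi> \<longleftrightarrow>
     (\<forall>x\<in>agents k l. \<forall>y\<in>agents k l. x \<noteq> y \<and> bundle_of k \<pi> y \<noteq> {} \<longrightarrow>
        (\<exists>g\<in>bundle_of k \<pi> y. v k e1 e2 x (bundle_of k \<pi> x) \<ge> v k e1 e2 x (bundle_of k \<pi> y - {g})))"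

definition social_welfare :: "nat \<Rightarrow> nat \<Rightarrow> (nat \<Rightarrow> nat) \<Rightarrow> (nat \<Rightarrow> nat) \<Rightarrow> (item \<Rightarrow> agent) \<Rightarrow> real" where
  "social_welfare k l e1 e2 \<pi> = (\<Sum>x\<in>agents k l. v k e1 e2 x (bundle_of k \<pi> x))"

definition independent_set :: "nat \<Rightarrow> nat \<Rightarrow> (nat \<Rightarrow> nat) \<Rightarrow> (nat \<Rightarrow> nat) \<Rightarrow> nat set \<Rightarrow> bool" where
  "independent_set k l e1 e2 I \<longleftrightarrow>
     I \<subseteq> {0..<k} \<and> (\<forall>i<l. \<not> (e1 i \<in> I \<and> e2 i \<in> I))"

end

theory Submission
  imports Defs
begin

lemma items_eq: "items k = (\<lambda>(r,j). ItB r j) ` ({..<k}\<times>{..<k}) \<union> ItC ` {..<k^2}"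
  by (auto simp: items_def)

lemma aset_sub: "(\<lambda>(i,j). AgA i j) ` ({..<l}\<times>{..<k}) \<subseteq> agents k l"
  by (auto simp: agents_def)

lemma agents_fin: "finite (agents k l)"
proof -
  have "agents k l = (\<lambda>(i,j). AgA i j) ` ({..<l}\<times>{..<k}) \<union> AgS ` {..<k}"
    by (auto simp: agents_def)
  thus ?thesis by simp
qed

lemma items_fin: "finite (items k)"
  unfolding items_eq by simp

lemma items_card: "card (items k) \<le> 2 * k^2"
proof -
  have "card (items k) \<le> card ((\<lambda>(r,j). ItB r j) ` ({..<k}\<times>{..<k})) + card (ItC ` {..<k^2})"
    unfolding items_eq by (rule card_Un_le)
  also have "\<dots> \<le> card ({..<k}\<times>{..<k}) + card {..<k^2}"
    by (intro add_mono card_image_le) auto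
  finally show ?thesis by (simp add: power2_eq_square)
qed

lemma tau_vals: "k \<ge> 2 \<Longrightarrow> tau k > 0 \<and> tau k \<le> 1/2"
proof -
  assume k: "k \<ge> 2"
  hence "real k \<ge> 2" by simp
  hence "(real k)^2 \<ge> 2*2" unfolding power2_eq_square by (intro mult_mono) auto
  thus ?thesis using k by (simp add: tau_def divide_simps)
qed


lemma val_nonneg: "k \<ge> 2 \<Longrightarrow> val k e1 e2 x g \<ge> 0"
  using tau_vals[of k] by (cases x; cases g) auto

lemma v_nonneg: "k \<ge> 2 \<Longrightarrow> v k e1 e2 x S \<ge> 0"
  unfolding v_def by (intro sum_nonneg val_nonneg)

lemma v_ge_mem: "k \<ge> 2 \<Longrightarrow> finite S \<Longrightarrow> g \<in> S \<Longrightarrow> v k e1 e2 x S \<ge> val k e1 e2 x g"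
  unfolding v_def by (rule member_le_sum) (auto intro: val_nonneg)

lemma bundle_fin: "finite (bundle_of k \<pi> x)"
  unfolding bundle_of_def using items_fin by simp

theorem mainTheorem13:
  fixes k l t :: nat and e1 e2 :: "nat \<Rightarrow> nat" and \<pi> :: "item \<Rightarrow> agent"
  assumes "k \<ge> 2" and "l > 2 * k"
    and "\<forall>i<l. e1 i < k \<and> e2 i < k \<and> e1 i \<noteq> e2 i"
    and "\<forall>I. independent_set k l e1 e2 I \<longrightarrow> card I \<le> t"
    and "is_allocation k l \<pi>"
    and "EF1 k l e1 e2 \<pi>"
  shows "social_welfare k l e1 e2 \<pi> \<le> real t + 2"
proof -
  note k = assms(1)
  define A where "A = bundle_of k \<pi>"
  define V where "V = val k e1 e2"
  have tv: "tau k > 0" "tau k \<le> 1/2" using tau_vals[OF k] by auto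
  have kr: "real k \<ge> 2" using k by simp
  have kk: "(real k)^2 > 0" using kr by simp
  have tauk: "tau k / 2 = 1 / (real k)^2" by (simp add: tau_def)
  have cpos: "(1 - tau k) / (real k)^2 > 0" using tv kk by simp
  have A_fin: "finite (A x)" for x unfolding A_def by (rule bundle_fin)
  have A_mem: "g \<in> A x \<longleftrightarrow> g \<in> items k \<and> \<pi> g = x" for g x
    unfolding A_def bundle_of_def by simp
  have ef1: "\<And>x y. x \<in> agents k l \<Longrightarrow> y \<in> agents k l \<Longrightarrow> x \<noteq> y \<Longrightarrow> A y \<noteq> {} \<Longrightarrow>
      \<exists>g\<in>A y. v k e1 e2 x (A x) \<ge> v k e1 e2 x (A y - {g})"
    using assms(6) unfolding EF1_def A_def by blast
  define aset where "aset = (\<lambda>(i,j). AgA i j) ` ({..<l}\<times>{..<k})"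
  have "card aset = l * k" unfolding aset_def
    by (subst card_image) (auto simp: inj_on_def)
  moreover have "card (\<pi> ` items k) \<le> 2 * k^2"
    using card_image_le[OF items_fin, of \<pi> k] items_card[of k] by linarith
  moreover have "2 * k^2 < l * k" using assms(2) k by (simp add: power2_eq_square)
  ultimately have "\<not> aset \<subseteq> \<pi> ` items k"
    by (metis card_mono finite_imageI items_fin leD le_less_trans)
  then obtain z where zA: "z \<in> aset" and zn: "z \<notin> \<pi> ` items k" by blast
  obtain i0 j0 where z: "z = AgA i0 j0" using zA unfolding aset_def by auto
  have z_ag: "z \<in> agents k l" using zA aset_sub unfolding aset_def by blast
  have Az: "A z = {}" using zn A_mem by auto
  have oneC: "c1 = c2" if x: "x \<in> agents k l" "x \<noteq> z" and c: "ItC c1 \<in> A x" "ItC c2 \<in> A x"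
    for x c1 c2
  proof (rule ccontr)
    assume ne: "c1 \<noteq> c2"
    have "A x \<noteq> {}" using c by auto
    then obtain g where g: "g \<in> A x" and le: "v k e1 e2 z (A z) \<ge> v k e1 e2 z (A x - {g})"
      using ef1[OF z_ag x(1)] x(2) by metis
    have "v k e1 e2 z (A z) = 0" using Az by (simp add: v_def)
    moreover obtain c where "ItC c \<in> A x - {g}" using c ne by (cases "g = ItC c1") auto
    hence "v k e1 e2 z (A x - {g}) \<ge> val k e1 e2 z (ItC c)"
      by (intro v_ge_mem[OF k]) (auto simp: A_fin)
    ultimately show False using le cpos z by simp
  qed
  define S where "S j = {r. r < k \<and> \<pi> (ItB r j) = AgS j}" for j
  have indep: "independent_set k l e1 e2 (S j)" if j: "j < k" for j
    unfolding independent_set_def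
  proof (intro conjI allI impI notI)
    show "S j \<subseteq> {0..<k}" unfolding S_def by auto
  next
    fix i assume il: "i < l" and both: "e1 i \<in> S j \<and> e2 i \<in> S j"
    define x where "x = AgA i j"
    define y where "y = AgS j"
    have xa: "x \<in> agents k l" "y \<in> agents k l" using il j by (auto simp: agents_def x_def y_def)
    have e: "e1 i < k" "e2 i < k" "e1 i \<noteq> e2 i" using assms(3) il by auto
    have b1: "ItB (e1 i) j \<in> A y" "ItB (e2 i) j \<in> A y"
      using both e j unfolding S_def A_mem y_def by (auto simp: items_def)
    then obtain g where g: "g \<in> A y" and le: "v k e1 e2 x (A x) \<ge> v k e1 e2 x (A y - {g})"
      using ef1[OF xa] by (metis x_def y_def agent.distinct(1) empty_iff)
    obtain r where r: "r = e1 i \<or> r = e2 i" "ItB r j \<in> A y - {g}"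
      using b1 e(3) by (cases "g = ItB (e1 i) j") auto
    have "v k e1 e2 x (A y - {g}) \<ge> val k e1 e2 x (ItB r j)"
      by (intro v_ge_mem[OF k]) (use r in \<open>auto simp: A_fin\<close>)
    hence ge: "v k e1 e2 x (A y - {g}) \<ge> 1 / (real k)^2" using r tauk by (auto simp: x_def)
    have zeroB: "val k e1 e2 x h = 0" if hA: "h \<in> A x" and hC: "\<And>c. h \<noteq> ItC c" for h
    proof -
      obtain r' j' where h: "h = ItB r' j'" using hC by (cases h) auto
      have "\<pi> h = x" using hA A_mem by auto
      hence "\<not> (j' = j \<and> (r' = e1 i \<or> r' = e2 i))"
        using both unfolding S_def x_def h by auto
      thus ?thesis by (auto simp: x_def h)
    qed
    have "v k e1 e2 x (A x) \<le> (1 - tau k) / (real k)^2"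
    proof (cases "\<exists>c. ItC c \<in> A x")
      case False
      hence "v k e1 e2 x (A x) = 0" unfolding v_def
        by (intro sum.neutral) (metis zeroB)
      thus ?thesis using cpos by simp
    next
      case True
      then obtain c where c: "ItC c \<in> A x" by blast
      have xz: "x \<noteq> z" using c Az by auto
      have "v k e1 e2 x (A x) = val k e1 e2 x (ItC c) + (\<Sum>h\<in>A x - {ItC c}. val k e1 e2 x h)"
        unfolding v_def by (rule sum.remove[OF A_fin c])
      also have "(\<Sum>h\<in>A x - {ItC c}. val k e1 e2 x h) = 0"
      proof (intro sum.neutral ballI)
        fix h assume h: "h \<in> A x - {ItC c}"
        have "\<And>c'. h \<noteq> ItC c'" using oneC[OF xa(1) xz c] h by auto
        thus "val k e1 e2 x h = 0" using zeroB h by auto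
      qed
      finally show ?thesis by (simp add: x_def)
    qed
    with ge le have "1 / (real k)^2 \<le> (1 - tau k) / (real k)^2" by linarith
    thus False using tv kk by (simp add: divide_right_mono_neg divide_le_cancel)
  qed
  have Scard: "card (S j) \<le> t" if "j < k" for j using assms(4) indep[OF that] by blast
  have sw: "social_welfare k l e1 e2 \<pi> = (\<Sum>g\<in>items k. V (\<pi> g) g)"
  proof -
    have "social_welfare k l e1 e2 \<pi> = (\<Sum>x\<in>agents k l. \<Sum>g\<in>{g. g \<in> items k \<and> \<pi> g = x}. V (\<pi> g) g)"
      unfolding social_welfare_def v_def bundle_of_def V_def
      by (intro sum.cong refl) auto
    also have "\<dots> = (\<Sum>g\<in>items k. V (\<pi> g) g)"
      by (rule sum.group[OF items_fin agents_fin]) (use assms(5) in \<open>auto simp: is_allocation_def\<close>)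
    finally show ?thesis .
  qed
  define f where "f g = (case g of ItB r j \<Rightarrow> (if \<pi> g = AgS j then 1 / real k else 0) | ItC c \<Rightarrow> 0)" for g
  have pt: "V (\<pi> g) g \<le> 1 / (real k)^2 + f g" for g
  proof (cases g)
    case (ItB r j)
    then show ?thesis using tauk kk
      by (cases "\<pi> g") (auto simp: V_def f_def)
  next
    case (ItC c)
    then show ?thesis using tv kk
      by (cases "\<pi> g") (auto simp: V_def f_def divide_right_mono)
  qed
  have "(\<Sum>g\<in>items k. V (\<pi> g) g) \<le> (\<Sum>g\<in>items k. 1 / (real k)^2 + f g)"
    by (intro sum_mono pt)
  also have "\<dots> = real (card (items k)) / (real k)^2 + (\<Sum>g\<in>items k. f g)"
    by (simp add: sum.distrib)
  also have "real (card (items k)) / (real k)^2 \<le> 2"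
  proof -
    have "real (card (items k)) \<le> 2 * (real k)^2" using items_card[of k] by (metis of_nat_le_iff of_nat_mult of_nat_numeral of_nat_power)
    thus ?thesis using kk by (simp add: divide_simps)
  qed
  also have "(\<Sum>g\<in>items k. f g) = (\<Sum>g\<in>(\<lambda>(r,j). ItB r j) ` ({..<k}\<times>{..<k}). f g)"
    unfolding items_eq
    by (rule sum.mono_neutral_right) (auto simp: f_def)
  also have "\<dots> = (\<Sum>(r,j)\<in>{..<k}\<times>{..<k}. f (ItB r j))"
    by (subst sum.reindex) (auto simp: inj_on_def case_prod_beta)
  also have "\<dots> = (\<Sum>r<k. \<Sum>j<k. f (ItB r j))"
    by (rule sum.cartesian_product[symmetric])
  also have "\<dots> = (\<Sum>j<k. \<Sum>r<k. f (ItB r j))"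
    by (rule sum.swap)
  also have "\<dots> = (\<Sum>j<k. real (card (S j)) / real k)"
  proof (intro sum.cong refl)
    fix j
    have "(\<Sum>r<k. f (ItB r j)) = (\<Sum>r<k. if \<pi> (ItB r j) = AgS j then 1/real k else 0)"
      by (simp add: f_def)
    also have "\<dots> = (\<Sum>r\<in>{r\<in>{..<k}. \<pi> (ItB r j) = AgS j}. 1/real k)"
      by (rule sum.inter_filter[symmetric]) simp
    also have "{r\<in>{..<k}. \<pi> (ItB r j) = AgS j} = S j" by (auto simp: S_def)
    finally have "(\<Sum>r<k. f (ItB r j)) = (\<Sum>r\<in>S j. 1 / real k)" .
    thus "(\<Sum>r<k. f (ItB r j)) = real (card (S j)) / real k" by simp
  qed
  also have "\<dots> \<le> (\<Sum>j<k. real t / real k)"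
    by (intro sum_mono divide_right_mono) (use Scard in auto)
  also have "\<dots> = real t" using kr by simp
  finally show ?thesis using sw by simp
qed

end
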